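(* Let $\mathbf{c}\in H_{1,2,2}$ be primitive and let $p$ be a rational prime dividing $N(\mathbf{c})$. Then any left greatest common divisor of $\mathbf{c}$ and $p$ is a prime of $H_{1,2,2}$, and there is a unique primary element among the left greatest common divisors of $\mathbf{c}$ and $p$.
   Context: Let $\mathbf{i},\mathbf{j},\mathbf{k}$ be the standard quaternion units; $\overline{\mathbf{q}}$ is quaternion conjugation and $N(\mathbf{q})=\mathbf{q}\overline{\mathbf{q}}$. $H_{1,2,2}$ is the subring of the quaternions equal to the $\mathbb{Z}$-module generated by $\mathbf{v}_1=1$, $\mathbf{v}_2=\mathbf{i}$, $\mathbf{v}_3=\tfrac12(1+\mathbf{i}+\sqrt2\,\mathbf{j})$, $\mathbf{v}_4=\tfrac12(1+\mathbf{i}+\sqrt2\,\mathbf{k})$; it is norm Euclidean, so any two nonzero elements $\mathbf{a},\mathbf{b}$ have a left greatest common divisor $\mathbf{d}$: $\mathbf{a}=\mathbf{d}\mathbf{a}'$, $\mathbf{b}=\mathbf{d}\mathbf{b}'$ for some $\mathbf{a}',\mathbf{b}'\in H_{1,2,2}$ and $\mathbf{d}=\mathbf{a}\mathbf{x}+\mathbf{b}\mathbf{y}$ for some $\mathbf{x},\mathbf{y}\in H_{1,2,2}$; it is unique up to right multiplication by units (invertible elements). A prime of $H_{1,2,2}$ is a nonzero nonunit $\boldsymbol\pi$ such that any factorization $\boldsymbol\pi=\mathbf{a}\mathbf{b}$ in $H_{1,2,2}$ has $\mathbf{a}$ or $\mathbf{b}$ a unit. Let $I=2(1+\mathbf{i})H_{1,2,2}$.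 An element $\mathbf{q}$ is primary if $\mathbf{q}-1\in I$ or $\mathbf{q}-(1+2\mathbf{v}_3)\in I$. An element $\mathbf{c}=c_1\mathbf{v}_1+c_2\mathbf{v}_2+c_3\mathbf{v}_3+c_4\mathbf{v}_4$ ($c_i\in\mathbb{Z}$) is primitive if it is primary and $\gcd(c_1,c_2,c_3,c_4)=1$. *)

theory Defs
  imports Complex_Main "HOL-Computational_Algebra.Primes"
begin

datatype quat = Quat (qre: real) (qi: real) (qj: real) (qk: real)

instantiation quat :: "{zero, one, plus, minus, uminus, times}"
begin
definition "0 = Quat 0 0 0 0"
definition "1 = Quat 1 0 0 0"
definition "p + q = Quat (qre p + qre q) (qi p + qi q) (qj p + qj q) (qk p + qk q)"
definition "p - q = Quat (qre p - qre q) (qi p - qi q) (qj p - qj q) (qk p - qk q)"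
definition "- q = Quat (- qre q) (- qi q) (- qj q) (- qk q)"
definition "p * q = Quat
   (qre p * qre q - qi p * qi q - qj p * qj q - qk p * qk q)
   (qre p * qi q + qi p * qre q + qj p * qk q - qk p * qj q)
   (qre p * qj q - qi p * qk q + qj p * qre q + qk p * qi q)
   (qre p * qk q + qi p * qj q - qj p * qi q + qk p * qre q)"
instance ..
end

definition qI :: quat where "qI = Quat 0 1 0 0"
definition qJ :: quat where "qJ = Quat 0 0 1 0"
definition qK :: quat where "qK = Quat 0 0 0 1"

definition qreal :: "real \<Rightarrow> quat" where "qreal r = Quat r 0 0 0"

definition qconj :: "quat \<Rightarrow> quat" where
  "qconj q = Quat (qre q) (- qi q) (- qj q) (- qk q)"
definition qN :: "quat \<Rightarrow> quat" where "qN q = q * qconj q"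

definition v1 :: quat where "v1 = 1"
definition v2 :: quat where "v2 = qI"
definition v3 :: quat where "v3 = qreal (1/2) * (1 + qI + qreal (sqrt 2) * qJ)"
definition v4 :: quat where "v4 = qreal (1/2) * (1 + qI + qreal (sqrt 2) * qK)"

definition Hcomb :: "int \<Rightarrow> int \<Rightarrow> int \<Rightarrow> int \<Rightarrow> quat" where
  "Hcomb c1 c2 c3 c4 = qreal (of_int c1) * v1 + qreal (of_int c2) * v2
                     + qreal (of_int c3) * v3 + qreal (of_int c4) * v4"

definition H122 :: "quat set" where
  "H122 = {Hcomb c1 c2 c3 c4 | c1 c2 c3 c4. True}"

definition Hunit :: "quat \<Rightarrow> bool" where
  "Hunit u \<longleftrightarrow> u \<in> H122 \<and> (\<exists>v\<in>H122. u * v = 1 \<and> v * u = 1)"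

definition Hprime :: "quat \<Rightarrow> bool" where
  "Hprime \<pi> \<longleftrightarrow> \<pi> \<in> H122 \<and> \<pi> \<noteq> 0 \<and> \<not> Hunit \<pi> \<and>
     (\<forall>a\<in>H122. \<forall>b\<in>H122. \<pi> = a * b \<longrightarrow> Hunit a \<or> Hunit b)"

definition left_gcd :: "quat \<Rightarrow> quat \<Rightarrow> quat \<Rightarrow> bool" where
  "left_gcd a b d \<longleftrightarrow> d \<in> H122 \<and>
     (\<exists>a'\<in>H122. a = d * a') \<and> (\<exists>b'\<in>H122. b = d * b') \<and>
     (\<exists>x\<in>H122. \<exists>y\<in>H122. d = a * x + b * y)"

definition Iideal :: "quat set" where
  "Iideal = {qreal 2 * (1 + qI) * h | h. h \<in> H122}"

definition primary :: "quat \<Rightarrow> bool" where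
  "primary q \<longleftrightarrow> q \<in> H122 \<and>
     (q - 1 \<in> Iideal \<or> q - (1 + qreal 2 * v3) \<in> Iideal)"

definition primitive :: "quat \<Rightarrow> bool" where
  "primitive c \<longleftrightarrow> primary c \<and>
     (\<exists>c1 c2 c3 c4. c = Hcomb c1 c2 c3 c4 \<and> gcd (gcd c1 c2) (gcd c3 c4) = 1)"

end

theory Submission
  imports Defs
begin

lemma quat_eqI: "qre a = qre b \<Longrightarrow> qi a = qi b \<Longrightarrow> qj a = qj b \<Longrightarrow> qk a = qk b \<Longrightarrow> a = b"
  by (cases a; cases b) auto

lemmas qdefs = zero_quat_def one_quat_def plus_quat_def minus_quat_def uminus_quat_def times_quat_def

instance quat :: ring_1
  by standard (auto intro!: quat_eqI simp: qdefs algebra_simps)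

definition nrm :: "quat \<Rightarrow> real" where
  "nrm q = qre q ^ 2 + qi q ^ 2 + qj q ^ 2 + qk q ^ 2"

lemma qreal_mult: "qreal a * q = Quat (a * qre q) (a * qi q) (a * qj q) (a * qk q)"
  by (simp add: qreal_def qdefs)
lemma qreal_comm: "qreal a * q = q * qreal a"
  by (auto intro!: quat_eqI simp: qreal_def qdefs)
lemma qreal_mult_qreal: "qreal a * qreal b = qreal (a * b)"
  by (auto intro!: quat_eqI simp: qreal_def qdefs)
lemma qreal_1: "qreal 1 = 1" by (simp add: qreal_def qdefs)
lemma qreal_0: "qreal 0 = 0" by (simp add: qreal_def qdefs)
lemma qconj_mult: "qconj (a * b) = qconj b * qconj a"
  by (auto intro!: quat_eqI simp: qconj_def qdefs algebra_simps)
lemma qconj_qconj: "qconj (qconj a) = a"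
  by (auto intro!: quat_eqI simp: qconj_def)
lemma qconj_qreal: "qconj (qreal a) = qreal a"
  by (auto intro!: quat_eqI simp: qconj_def qreal_def)
lemma mult_qconj: "q * qconj q = qreal (nrm q)"
  by (auto intro!: quat_eqI simp: qconj_def qdefs qreal_def nrm_def power2_eq_square algebra_simps)
lemma qconj_mult_self: "qconj q * q = qreal (nrm q)"
  by (auto intro!: quat_eqI simp: qconj_def qdefs qreal_def nrm_def power2_eq_square algebra_simps)
lemma nrm_mult: "nrm (a * b) = nrm a * nrm b"
  by (simp add: nrm_def qdefs power2_eq_square algebra_simps)
lemma nrm_nonneg: "nrm q \<ge> 0" by (simp add: nrm_def)
lemma nrm_eq_0: "nrm q = 0 \<longleftrightarrow> q = 0"
proof
  assume "nrm q = 0"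
  then have "qre q ^ 2 = 0 \<and> qi q ^ 2 = 0 \<and> qj q ^ 2 = 0 \<and> qk q ^ 2 = 0"
    unfolding nrm_def using zero_le_power2[of "qre q"] zero_le_power2[of "qi q"]
      zero_le_power2[of "qj q"] zero_le_power2[of "qk q"] by linarith
  then have "qre q = 0 \<and> qi q = 0 \<and> qj q = 0 \<and> qk q = 0" by simp
  then show "q = 0" by (auto intro!: quat_eqI simp: qdefs)
qed (simp add: nrm_def qdefs)
lemma qN_eq: "qN q = qreal (nrm q)" by (simp add: qN_def mult_qconj)
lemma qreal_inj: "qreal a = qreal b \<longleftrightarrow> a = b" by (simp add: qreal_def)

type_synonym i4 = "int \<times> int \<times> int \<times> int"
fun HC :: "i4 \<Rightarrow> quat" where "HC (a,b,c,d) = Hcomb a b c d"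

lemma Hcomb_eq: "Hcomb a b c d = Quat (a + (c+d)/2) (b + (c+d)/2) (c * sqrt 2 / 2) (d * sqrt 2 / 2)"
  by (simp add: Hcomb_def v1_def v2_def v3_def v4_def qreal_def qI_def qJ_def qK_def qdefs algebra_simps add_divide_distrib)

lemma H122_iff: "q \<in> H122 \<longleftrightarrow> (\<exists>e. q = HC e)"
  unfolding H122_def by auto

fun mulc :: "i4 \<Rightarrow> i4 \<Rightarrow> i4" where
 "mulc (a1,a2,a3,a4) (b1,b2,b3,b4) =
  (a1*b1 -a2*b2 -a2*b3 -a3*b3 -a4*b2 -a4*b3 -a4*b4,
   a1*b2 +a2*b1 +a2*b4 +a3*b2 +a3*b4 -a4*b3,
   a1*b3 -a2*b4 +a3*b1 +a3*b3 +a4*b2 +a4*b3,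
   a1*b4 +a2*b3 -a3*b2 +a4*b1 +a4*b3 +a4*b4)"

lemma sqrt2_sq: "sqrt 2 * sqrt 2 = (2::real)" by simp

lemma HC_mult: "HC a * HC b = HC (mulc a b)"
  apply (cases a; cases b)
  apply (auto intro!: quat_eqI simp: Hcomb_eq qdefs algebra_simps add_divide_distrib diff_divide_distrib)
  done

lemma HC_add: "HC (a1,a2,a3,a4) + HC (b1,b2,b3,b4) = HC (a1+b1,a2+b2,a3+b3,a4+b4)"
  by (auto intro!: quat_eqI simp: Hcomb_eq qdefs algebra_simps add_divide_distrib)
lemma HC_diff: "HC (a1,a2,a3,a4) - HC (b1,b2,b3,b4) = HC (a1-b1,a2-b2,a3-b3,a4-b4)"
  by (auto intro!: quat_eqI simp: Hcomb_eq qdefs algebra_simps add_divide_distrib diff_divide_distrib)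
lemma HC_inj: "HC (a1,a2,a3,a4) = HC (b1,b2,b3,b4) \<Longrightarrow> a1=b1 \<and> a2=b2 \<and> a3=b3 \<and> a4=b4"
proof -
  assume h: "HC (a1,a2,a3,a4) = HC (b1,b2,b3,b4)"
  have 3: "a3 = b3" using arg_cong[OF h, of qj] by (simp add: Hcomb_eq)
  have 4: "a4 = b4" using arg_cong[OF h, of qk] by (simp add: Hcomb_eq)
  have 1: "a1 = b1" using arg_cong[OF h, of qre] 3 4 by (simp add: Hcomb_eq)
  have 2: "a2 = b2" using arg_cong[OF h, of qi] 3 4 by (simp add: Hcomb_eq)
  show ?thesis using 1 2 3 4 by simp
qed
lemma HC_conj: "qconj (HC (a,b,c,d)) = HC (a+c+d, -b, -c, -d)"
  by (auto intro!: quat_eqI simp: Hcomb_eq qconj_def field_simps)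
lemma HC_one: "1 = HC (1,0,0,0)"
  by (auto intro!: quat_eqI simp: Hcomb_eq qdefs)
lemma HC_zero: "0 = HC (0,0,0,0)"
  by (auto intro!: quat_eqI simp: Hcomb_eq qdefs)
lemma qreal_int: "qreal (of_int n) = HC (n,0,0,0)"
  by (auto intro!: quat_eqI simp: Hcomb_eq qreal_def)
lemma qreal_int_mult: "qreal (of_int n) * HC (a,b,c,d) = HC (n*a,n*b,n*c,n*d)"
  by (auto intro!: quat_eqI simp: Hcomb_eq qreal_mult algebra_simps add_divide_distrib)

fun fm :: "i4 \<Rightarrow> int" where
  "fm (a,b,c,d) = a^2 + b^2 + (a+b)*(c+d) + c^2 + c*d + d^2"

lemma nrm_HC: "nrm (HC e) = of_int (fm e)"
  apply (cases e)
  apply (simp add: nrm_def Hcomb_eq power2_eq_square algebra_simps add_divide_distrib)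
  done

lemma H_mult: "a \<in> H122 \<Longrightarrow> b \<in> H122 \<Longrightarrow> a * b \<in> H122"
  unfolding H122_iff by (metis HC_mult)
lemma H_add: "a \<in> H122 \<Longrightarrow> b \<in> H122 \<Longrightarrow> a + b \<in> H122"
  unfolding H122_iff by (metis HC_add prod_cases4)
lemma H_diff: "a \<in> H122 \<Longrightarrow> b \<in> H122 \<Longrightarrow> a - b \<in> H122"
  unfolding H122_iff by (metis HC_diff prod_cases4)
lemma H_one: "1 \<in> H122" unfolding H122_iff by (metis HC_one)
lemma H_zero: "0 \<in> H122" unfolding H122_iff by (metis HC_zero)
lemma H_conj: "a \<in> H122 \<Longrightarrow> qconj a \<in> H122"
  unfolding H122_iff by (metis HC_conj prod_cases4)
lemma H_int: "qreal (of_int n) \<in> H122" unfolding H122_iff by (metis qreal_int)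
lemma H_nrm: "a \<in> H122 \<Longrightarrow> \<exists>n::nat. nrm a = real n"
proof -
  assume "a \<in> H122"
  then obtain e where e: "a = HC e" by (auto simp: H122_iff)
  have "fm e \<ge> 0" using nrm_HC[of e] nrm_nonneg[of "HC e"] by simp
  then show ?thesis using e nrm_HC[of e] by (metis of_int_of_nat_eq of_real_of_int_eq of_nat_nat)
qed

lemma round_close: "\<bar>x - real_of_int \<lfloor>x + 1/2\<rfloor>\<bar> \<le> 1/2"
  using floor_correct[of "x + 1/2"] by linarith

lemma sq_le_quarter: "\<bar>x::real\<bar> \<le> 1/2 \<Longrightarrow> x^2 \<le> 1/4"
proof -
  assume "\<bar>x\<bar> \<le> 1/2"
  then have "\<bar>x\<bar>^2 \<le> (1/2)^2" by (intro power_mono) auto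
  moreover have "(1/2::real)^2 = 1/4" by (simp add: power2_eq_square)
  ultimately show ?thesis by simp
qed

lemma euclid_approx: "\<exists>h\<in>H122. nrm (z - h) < 1"
proof -
  define s where "s = sqrt (2::real)"
  have ss: "s * s = 2" unfolding s_def by simp
  have spos: "s > 0" unfolding s_def by simp
  have ss': "s * (s * y) = 2 * y" for y using ss by (metis mult.assoc)
  define c3 where "c3 = \<lfloor>qj z * s + 1/2\<rfloor>"
  define c4 where "c4 = \<lfloor>qk z * s + 1/2\<rfloor>"
  define c1 where "c1 = \<lfloor>qre z - (c3 + c4)/2 + 1/2\<rfloor>"
  define c2 where "c2 = \<lfloor>qi z - (c3 + c4)/2 + 1/2\<rfloor>"
  have r3: "\<bar>qj z * s - c3\<bar> \<le> 1/2" unfolding c3_def by (rule round_close)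
  have r4: "\<bar>qk z * s - c4\<bar> \<le> 1/2" unfolding c4_def by (rule round_close)
  have r1: "\<bar>(qre z - (c3 + c4)/2) - c1\<bar> \<le> 1/2" unfolding c1_def by (rule round_close)
  have r2: "\<bar>(qi z - (c3 + c4)/2) - c2\<bar> \<le> 1/2" unfolding c2_def by (rule round_close)
  have e: "nrm (z - HC (c1,c2,c3,c4)) = ((qre z - (c3 + c4)/2) - c1)^2 + ((qi z - (c3 + c4)/2) - c2)^2
      + (qj z * s - c3)^2 / 2 + (qk z * s - c4)^2 / 2"
  proof -
    have a: "(qj z - c3 * s / 2)^2 = (qj z * s - c3)^2 / 2"
      by (simp add: power2_eq_square field_simps ss ss')
    have b: "(qk z - c4 * s / 2)^2 = (qk z * s - c4)^2 / 2"
      by (simp add: power2_eq_square field_simps ss ss')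
    show ?thesis unfolding nrm_def using a b
      by (simp add: Hcomb_eq qdefs s_def algebra_simps)
  qed
  have "nrm (z - HC (c1,c2,c3,c4)) \<le> 1/4 + 1/4 + 1/8 + 1/8"
    unfolding e using sq_le_quarter[OF r1] sq_le_quarter[OF r2] sq_le_quarter[OF r3] sq_le_quarter[OF r4]
    by linarith
  then show ?thesis by (intro bexI[of _ "HC (c1,c2,c3,c4)"]) (auto simp: H122_iff)
qed

lemma qinv: "d \<noteq> 0 \<Longrightarrow> d * (qreal (1 / nrm d) * qconj d) = 1"
proof -
  assume "d \<noteq> 0"
  then have "nrm d \<noteq> 0" by (simp add: nrm_eq_0)
  have "d * (qreal (1 / nrm d) * qconj d) = qreal (1 / nrm d) * (d * qconj d)"
    by (metis mult.assoc qreal_comm)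
  also have "\<dots> = qreal (1 / nrm d * nrm d)" by (simp add: mult_qconj qreal_mult_qreal)
  also have "\<dots> = 1" using \<open>nrm d \<noteq> 0\<close> by (simp add: qreal_1)
  finally show ?thesis .
qed

lemma division: "d \<noteq> 0 \<Longrightarrow> \<exists>h\<in>H122. nrm (x - d * h) < nrm d"
proof -
  assume d: "d \<noteq> 0"
  define z where "z = qreal (1 / nrm d) * qconj d * x"
  have dz: "d * z = x" unfolding z_def using qinv[OF d] by (metis mult.assoc mult_1_left)
  obtain h where h: "h \<in> H122" "nrm (z - h) < 1" using euclid_approx by blast
  have "x - d * h = d * (z - h)" using dz by (simp add: algebra_simps)
  then have "nrm (x - d * h) = nrm d * nrm (z - h)" by (simp add: nrm_mult)
  also have "\<dots> < nrm d"
  proof -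
    have "nrm d > 0" using d nrm_eq_0 nrm_nonneg[of d] by (metis order_le_less)
    then show ?thesis using mult_strict_left_mono[OF h(2), of "nrm d"] by simp
  qed
  finally show ?thesis using h(1) by blast
qed

lemma nrm_qreal: "nrm (qreal r) = r^2" by (simp add: nrm_def qreal_def)

lemma sq_divisors: "prime (q::nat) \<Longrightarrow> a * b = q^2 \<Longrightarrow> a = 1 \<or> a = q \<or> a = q^2"
proof -
  assume q: "prime q" and ab: "a * b = q^2"
  then have "a dvd q^2" by (metis dvd_triv_left)
  then obtain m where m: "m \<le> 2" "normalize a = q ^ m" using divides_primepow[OF q] by blast
  then have "a = q ^ m" by simp
  moreover have "m = 0 \<or> m = 1 \<or> m = 2" using m(1) by auto
  ultimately show ?thesis by auto
qed

lemma gcd_exists: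
  assumes c: "c \<in> H122" and P: "P \<in> H122" "P \<noteq> 0"
  shows "\<exists>d. left_gcd c P d"
proof -
  define L where "L = {c * x + P * y | x y. x \<in> H122 \<and> y \<in> H122}"
  have LH: "l \<in> L \<Longrightarrow> l \<in> H122" for l unfolding L_def using c P by (auto intro!: H_add H_mult)
  have cL: "c \<in> L" unfolding L_def by (rule CollectI, rule exI[of _ 1], rule exI[of _ 0]) (simp add: H_one H_zero)
  have PL: "P \<in> L" unfolding L_def by (rule CollectI, rule exI[of _ 0], rule exI[of _ 1]) (simp add: H_one H_zero)
  define S where "S = {n::nat. \<exists>l\<in>L. l \<noteq> 0 \<and> nrm l = real n}"
  obtain nP where "nrm P = real nP" using H_nrm[OF P(1)] by blast
  then have "nP \<in> S" unfolding S_def using PL P(2) by blast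
  define n0 where "n0 = (LEAST n. n \<in> S)"
  have "n0 \<in> S" unfolding n0_def by (rule LeastI) fact
  then obtain d where d: "d \<in> L" "d \<noteq> 0" "nrm d = real n0" unfolding S_def by blast
  have divs: "\<exists>h\<in>H122. t = d * h" if t: "t \<in> L" for t
  proof -
    obtain h where h: "h \<in> H122" "nrm (t - d * h) < nrm d" using division[OF d(2)] by blast
    obtain x1 y1 where 1: "t = c * x1 + P * y1" "x1 \<in> H122" "y1 \<in> H122" using t unfolding L_def by blast
    obtain x2 y2 where 2: "d = c * x2 + P * y2" "x2 \<in> H122" "y2 \<in> H122" using d(1) unfolding L_def by blast
    have "t - d * h = c * (x1 - x2 * h) + P * (y1 - y2 * h)"
      unfolding 1 2 by (simp add: algebra_simps)
    moreover have "x1 - x2 * h \<in> H122" "y1 - y2 * h \<in> H122"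
      using 1 2 h by (auto intro!: H_diff H_mult)
    ultimately have rL: "t - d * h \<in> L" unfolding L_def by blast
    have "t - d * h = 0"
    proof (rule ccontr)
      assume nz: "t - d * h \<noteq> 0"
      obtain k where k: "nrm (t - d * h) = real k" using H_nrm[OF LH[OF rL]] by blast
      then have "k \<in> S" unfolding S_def using rL nz by blast
      then have "n0 \<le> k" unfolding n0_def by (rule Least_le)
      then show False using h(2) k d(3) by simp
    qed
    then show ?thesis using h(1) by (intro bexI[of _ h]) auto
  qed
  show ?thesis unfolding left_gcd_def
    using LH[OF d(1)] divs[OF cL] divs[OF PL] d(1) unfolding L_def by blast
qed

lemma nrm_one_unit: "u \<in> H122 \<Longrightarrow> nrm u = 1 \<Longrightarrow> Hunit u"
  unfolding Hunit_def using H_conj mult_qconj qconj_mult_self qreal_1 by metis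

lemma unit_nrm: "Hunit u \<Longrightarrow> nrm u = 1"
proof -
  assume "Hunit u"
  then obtain v where v: "u \<in> H122" "v \<in> H122" "u * v = 1" unfolding Hunit_def by blast
  obtain a b where ab: "nrm u = real a" "nrm v = real b" using H_nrm v by metis
  have "nrm u * nrm v = 1" using v(3) nrm_mult[of u v] by (simp add: nrm_def qdefs)
  then have "a * b = 1" using ab by (metis of_nat_1 of_nat_eq_iff of_nat_mult)
  then show ?thesis using ab by simp
qed

lemma prime_norm_Hprime:
  assumes d: "d \<in> H122" "nrm d = real q" and q: "prime q"
  shows "Hprime d"
  unfolding Hprime_def
proof (intro conjI ballI impI)
  show "d \<in> H122" by fact
  show "d \<noteq> 0" using d q nrm_eq_0 by (metis of_nat_0 not_prime_0 of_nat_eq_iff)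
  show "\<not> Hunit d" using unit_nrm d q by (metis of_nat_1 of_nat_eq_iff not_prime_1)
  fix a b assume ab: "a \<in> H122" "b \<in> H122" "d = a * b"
  obtain x y where xy: "nrm a = real x" "nrm b = real y" using H_nrm ab by metis
  have "real q = real x * real y" using d(2) ab(3) nrm_mult xy by metis
  then have "q = x * y" by (metis of_nat_eq_iff of_nat_mult)
  then have "x = 1 \<or> y = 1" using prime_product q by metis
  then show "Hunit a \<or> Hunit b" using xy ab nrm_one_unit by auto
qed

lemma notinP:
  assumes "gcd (gcd c1 c2) (gcd c3 c4) = (1::int)" "prime p" "w \<in> H122"
    and "HC (c1,c2,c3,c4) = qreal (of_int p) * w"
  shows False
proof -
  obtain e1 e2 e3 e4 where w: "w = HC (e1,e2,e3,e4)" using assms(3) unfolding H122_iff by (metis prod_cases4)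
  have "HC (c1,c2,c3,c4) = HC (p*e1,p*e2,p*e3,p*e4)" using assms(4) w qreal_int_mult by simp
  then have "c1 = p*e1 \<and> c2 = p*e2 \<and> c3 = p*e3 \<and> c4 = p*e4" by (rule HC_inj)
  then have "p dvd gcd (gcd c1 c2) (gcd c3 c4)" by simp
  then show False using assms(1,2) not_prime_unit by metis
qed

lemma gcd_norm:
  assumes c: "c = HC (c1,c2,c3,c4)" "gcd (gcd c1 c2) (gcd c3 c4) = (1::int)"
    and p: "prime p" and m: "nrm c = of_int (p * m)"
    and g: "left_gcd c (qreal (of_int p)) d"
  shows "nrm d = real (nat p)"
proof -
  define P where "P = qreal (of_int p)"
  have cH: "c \<in> H122" using c(1) H122_iff by blast
  have PH: "P \<in> H122" unfolding P_def by (rule H_int)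
  obtain a' b' x y where g': "d \<in> H122" "a' \<in> H122" "c = d * a'" "b' \<in> H122" "P = d * b'"
     "x \<in> H122" "y \<in> H122" "d = c * x + P * y"
    using g unfolding left_gcd_def P_def by blast
  obtain nd where nd: "nrm d = real nd" using H_nrm[OF g'(1)] by blast
  obtain nb where nb: "nrm b' = real nb" using H_nrm[OF g'(4)] by blast
  note n = nd nb
  have p0: "p > 1" using p prime_gt_1_int by blast
  have "nrm P = real (nat p) ^ 2" unfolding P_def nrm_qreal using p0 by simp
  moreover have "nrm P = nrm d * nrm b'" using g'(5) nrm_mult by simp
  ultimately have "real (nd * nb) = real ((nat p)^2)" using n by simp
  then have ndnb: "nd * nb = (nat p)^2" by (metis of_nat_eq_iff)
  have pn: "prime (nat p)" using p prime_int_nat_transfer by blast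
  have "nd = 1 \<or> nd = nat p \<or> nd = (nat p)^2" using sq_divisors[OF pn ndnb] .
  moreover have "nd \<noteq> 1"
  proof
    assume "nd = 1"
    then have u: "d * qconj d = 1" using n mult_qconj qreal_1 by simp
    have cc: "qconj c * c = P * qreal (of_int m)"
      unfolding P_def qconj_mult_self m by (simp add: qreal_mult_qreal)
    define w where "w = qreal (of_int m) * x * qconj d + qconj c * y * qconj d"
    have dc: "qconj d \<in> H122" "qconj c \<in> H122" using H_conj g'(1) cH by auto
    have wH: "w \<in> H122" unfolding w_def
      by (rule H_add; rule H_mult; (rule H_mult)?) (rule H_int | rule g' | rule dc)+
    have "qconj c = qconj c * (d * qconj d)" using u by simp
    also have "\<dots> = (qconj c * c) * x * qconj d + (qconj c * P) * y * qconj d"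
      unfolding g'(8) by (simp only: distrib_left distrib_right mult.assoc)
    also have "\<dots> = P * w"
    proof -
      have "qconj c * P = P * qconj c" unfolding P_def by (rule qreal_comm[symmetric])
      then show ?thesis unfolding cc w_def by (simp only: distrib_left mult.assoc)
    qed
    finally have "qconj c = P * w" .
    then have "qconj (qconj c) = qconj w * qconj P" by (simp add: qconj_mult)
    then have "c = qconj w * P" unfolding qconj_qconj P_def qconj_qreal .
    then have "c = P * qconj w" unfolding P_def by (simp only: qreal_comm)
    then have "HC (c1,c2,c3,c4) = qreal (of_int p) * qconj w" using c(1) unfolding P_def by simp
    from notinP[OF c(2) p H_conj[OF wH] this] show False .
  qed
  moreover have "nd \<noteq> (nat p)^2"
  proof
    assume "nd = (nat p)^2"
    then have "(nat p)^2 * nb = (nat p)^2 * 1" using ndnb by simp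
    moreover have "(nat p)^2 \<noteq> 0" using p0 by simp
    ultimately have "nb = 1" by (meson mult_left_cancel)
    then have u: "b' * qconj b' = 1" using n mult_qconj qreal_1 by simp
    have "P * qconj b' = d * b' * qconj b'" using g'(5) by simp
    also have "\<dots> = d" by (simp add: mult.assoc u)
    finally have "d = P * qconj b'" by simp
    then have "c = P * (qconj b' * a')" using g'(3) by (simp add: mult.assoc)
    then have "HC (c1,c2,c3,c4) = qreal (of_int p) * (qconj b' * a')" using c(1) unfolding P_def by simp
    from notinP[OF c(2) p H_mult[OF H_conj[OF g'(4)] g'(2)] this] show False .
  qed
  ultimately show ?thesis using n by simp
qed

fun subc :: "i4 \<Rightarrow> i4 \<Rightarrow> i4" where
  "subc (a1,a2,a3,a4) (b1,b2,b3,b4) = (a1-b1,a2-b2,a3-b3,a4-b4)"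

fun Icond :: "i4 \<Rightarrow> bool" where
  "Icond (a,b,c,d) = (even a \<and> even b \<and> even c \<and> even d \<and> (c - d) mod 4 = 0 \<and> (a + b - c) mod 4 = 0)"

definition U24 :: "i4 list" where
  "U24 = [(-1,-1,0,1), (-1,-1,1,0), (-1,-1,1,1), (-1,0,0,0), (-1,0,0,1), (-1,0,1,0), (0,-1,0,0),
   (0,-1,0,1), (0,-1,1,0), (0,0,-1,0), (0,0,-1,1), (0,0,0,-1), (0,0,0,1), (0,0,1,-1), (0,0,1,0),
   (0,1,-1,0), (0,1,0,-1), (0,1,0,0), (1,0,-1,0), (1,0,0,-1), (1,0,0,0), (1,1,-1,-1), (1,1,-1,0), (1,1,0,-1)]"

lemma U24_fm: "u \<in> set U24 \<Longrightarrow> fm u = 1"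
  unfolding U24_def by auto

lemma U24_uniq: "u \<in> set U24 \<Longrightarrow> r1 \<in> {(1,0,0,0),(1,0,2,0)} \<Longrightarrow> r2 \<in> {(1,0,0,0),(1,0,2,0)} \<Longrightarrow>
   Icond (subc (mulc r1 u) r2) \<Longrightarrow> u = (1,0,0,0) \<and> r1 = r2"
  unfolding U24_def by auto

definition box4 :: "i4 list" where
  "box4 = List.product [0..3] (List.product [0..3] (List.product [0..3] [0..3]))"

lemma finite_exist: "\<forall>m\<in>set box4. odd (fm m) \<longrightarrow>
   (\<exists>u\<in>set U24. Icond (subc (mulc m u) (1,0,0,0)) \<or> Icond (subc (mulc m u) (1,0,2,0)))"
  unfolding box4_def U24_def by code_simp

definition boxU :: "i4 list" where
  "boxU = List.product [-2..2] (List.product [-2..2] (List.product [-1..1] [-1..1]))"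

lemma finite_U: "\<forall>m\<in>set boxU. fm m = 1 \<longrightarrow> m \<in> set U24"
  unfolding boxU_def U24_def by code_simp

lemma box4_mem: "(a,b,c,d) \<in> set box4 \<longleftrightarrow> a \<in> {0..3} \<and> b \<in> {0..3} \<and> c \<in> {0..3} \<and> d \<in> {0..3}"
  unfolding box4_def set_product set_upto by auto

lemma boxU_mem: "(a,b,c,d) \<in> set boxU \<longleftrightarrow> a \<in> {-2..2} \<and> b \<in> {-2..2} \<and> c \<in> {-1..1} \<and> d \<in> {-1..1}"
  unfolding boxU_def set_product set_upto by auto

lemma sq_bound: "(x::int)^2 \<le> 4 \<Longrightarrow> -2 \<le> x \<and> x \<le> 2"
proof -
  assume "x^2 \<le> 4"
  then have "x^2 \<le> 2^2" by simp
  then have "\<bar>x\<bar> \<le> \<bar>2\<bar>" using abs_le_square_iff by blast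
  then show ?thesis by arith
qed

lemma sq_bound1: "(x::int)^2 \<le> 2 \<Longrightarrow> -1 \<le> x \<and> x \<le> 1"
proof -
  assume "x^2 \<le> 2"
  then have "x^2 < 2^2" by simp
  then have "\<bar>x\<bar> < \<bar>2\<bar>" using abs_le_square_iff by (meson not_le)
  then show ?thesis by arith
qed

lemma fm1_U24: "fm e = 1 \<Longrightarrow> e \<in> set U24"
proof -
  assume h: "fm e = 1"
  obtain a b c d where e: "e = (a,b,c,d)" by (metis prod_cases4)
  have id: "4 * fm e = (2*a+c+d)^2 + (2*b+c+d)^2 + 2*c^2 + 2*d^2"
    unfolding e by (simp add: power2_eq_square algebra_simps)
  have s: "(2*a+c+d)^2 + (2*b+c+d)^2 + 2*c^2 + 2*d^2 = 4" using id h by simp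
  have n: "(2*a+c+d)^2 \<ge> 0" "(2*b+c+d)^2 \<ge> 0" "c^2 \<ge> 0" "d^2 \<ge> 0" by simp_all
  have "c^2 \<le> 2" "d^2 \<le> 2" "(2*a+c+d)^2 \<le> 4" "(2*b+c+d)^2 \<le> 4" using s n by linarith+
  then have "-1 \<le> c \<and> c \<le> 1" "-1 \<le> d \<and> d \<le> 1" "-2 \<le> 2*a+c+d \<and> 2*a+c+d \<le> 2"
     "-2 \<le> 2*b+c+d \<and> 2*b+c+d \<le> 2"
    using sq_bound sq_bound1 by blast+
  then have "e \<in> set boxU" unfolding e boxU_mem by auto
  then show ?thesis using finite_U h by blast
qed

lemma Icond_shift: "Icond (a1 + 4*b1, a2 + 4*b2, a3+4*b3, a4+4*b4) = Icond (a1,a2,a3,a4)"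
proof -
  have "(a3 + 4*b3 - (a4 + 4*b4)) mod 4 = (a3 - a4) mod 4"
    by (metis (no_types) add_diff_add mod_mult_self2 mult.commute right_diff_distrib)
  moreover have "(a1 + 4*b1 + (a2 + 4*b2) - (a3 + 4*b3)) mod 4 = (a1 + a2 - a3) mod 4"
  proof -
    have "a1 + 4*b1 + (a2 + 4*b2) - (a3 + 4*b3) = (a1 + a2 - a3) + (b1 + b2 - b3) * 4" by (simp add: algebra_simps)
    then show ?thesis by (simp only: mod_mult_self1)
  qed
  ultimately show ?thesis by simp
qed

lemma I_gen: "qreal 2 * (1 + qI) = HC (2,2,0,0)"
  by (auto intro!: quat_eqI simp: Hcomb_eq qreal_def qI_def qdefs)

lemma Iideal_HC: "x \<in> Iideal \<longleftrightarrow> (\<exists>h. x = HC (2,2,0,0) * HC h)"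
  unfolding Iideal_def I_gen H122_iff by blast

lemma Iideal_iff: "HC e \<in> Iideal \<longleftrightarrow> Icond e"
proof
  assume "HC e \<in> Iideal"
  then obtain h where "HC e = HC (mulc (2,2,0,0) h)" unfolding Iideal_HC HC_mult by blast
  moreover obtain h1 h2 h3 h4 where h: "h = (h1,h2,h3,h4)" by (metis prod_cases4)
  moreover obtain e1 e2 e3 e4 where ee: "e = (e1,e2,e3,e4)" by (metis prod_cases4)
  moreover have "mulc (2,2,0,0) h = (2*h1 - 2*h2 - 2*h3, 2*h1 + 2*h2 + 2*h4, 2*h3 - 2*h4, 2*h3 + 2*h4)"
    unfolding h by simp
  ultimately have "HC (e1,e2,e3,e4) = HC (2*h1 - 2*h2 - 2*h3, 2*h1 + 2*h2 + 2*h4, 2*h3 - 2*h4, 2*h3 + 2*h4)"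
    by (simp add: ac_simps)
  then have "e1 = 2*h1 - 2*h2 - 2*h3 \<and> e2 = 2*h1 + 2*h2 + 2*h4 \<and> e3 = 2*h3 - 2*h4 \<and> e4 = 2*h3 + 2*h4"
    by (rule HC_inj)
  then show "Icond e" unfolding ee by simp
next
  assume "Icond e"
  moreover obtain e1 e2 e3 e4 where ee: "e = (e1,e2,e3,e4)" by (metis prod_cases4)
  ultimately have ic: "even e1" "even e2" "even e3" "even e4" "(e3 - e4) mod 4 = 0" "(e1 + e2 - e3) mod 4 = 0"
    by simp_all
  obtain d' where d': "e4 = 2*d'" using ic(4) by blast
  obtain t where t: "e3 - e4 = 4*t" using ic(5) by (metis dvd_def mod_0_imp_dvd)
  have dt: "e4 = 2*d'" "e3 = 2*d' + 4*t" using d' t by linarith+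
  obtain a b where ab: "e1 = 2*a" "e2 = 2*b" using ic(1,2) by blast
  obtain k where k: "e1 + e2 - e3 = 4*k" using ic(6) by (metis dvd_def mod_0_imp_dvd)
  have s: "a + b = d' + 2*t + 2*k" using k dt ab by linarith
  have "mulc (2,2,0,0) (d'+2*t+k, b-d'-t-k, d'+t, -t) = e"
    unfolding ee using dt ab s by (simp add: algebra_simps)
  then show "HC e \<in> Iideal" unfolding Iideal_HC HC_mult by metis
qed

lemma I_right: "x \<in> Iideal \<Longrightarrow> h \<in> H122 \<Longrightarrow> x * h \<in> Iideal"
  unfolding Iideal_def by (auto simp: mult.assoc intro: H_mult)

lemma I_add: "x \<in> Iideal \<Longrightarrow> y \<in> Iideal \<Longrightarrow> x + y \<in> Iideal"
proof -
  assume "x \<in> Iideal" "y \<in> Iideal"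
  then obtain a b where "a \<in> H122" "b \<in> H122" "x = qreal 2 * (1 + qI) * a" "y = qreal 2 * (1 + qI) * b"
    unfolding Iideal_def by blast
  then show ?thesis unfolding Iideal_def by (auto simp: distrib_left intro!: exI[of _ "a + b"] H_add)
qed

lemma I_diff: "x \<in> Iideal \<Longrightarrow> y \<in> Iideal \<Longrightarrow> x - y \<in> Iideal"
proof -
  assume "x \<in> Iideal" "y \<in> Iideal"
  then obtain a b where "a \<in> H122" "b \<in> H122" "x = qreal 2 * (1 + qI) * a" "y = qreal 2 * (1 + qI) * b"
    unfolding Iideal_def by blast
  then show ?thesis unfolding Iideal_def by (auto simp: right_diff_distrib intro!: exI[of _ "a - b"] H_diff)
qed

lemma I_four: "h \<in> H122 \<Longrightarrow> qreal 4 * h \<in> Iideal"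
proof -
  assume h: "h \<in> H122"
  have e: "qreal 4 = qreal 2 * (1 + qI) * (1 - qI)"
    by (auto intro!: quat_eqI simp: qreal_def qI_def qdefs)
  have "(1 - qI) * h \<in> H122"
    by (intro H_mult H_diff H_one h) (auto simp: H122_iff qI_def Hcomb_eq intro!: exI[of _ "(0,1,0,0)"])
  then show ?thesis unfolding Iideal_def e by (auto simp: mult.assoc)
qed

lemma HC_minus_one: "HC e - 1 = HC (subc e (1,0,0,0))"
proof -
  obtain a b c d where e: "e = (a,b,c,d)" by (metis prod_cases4)
  show ?thesis using HC_diff[of a b c d 1 0 0 0] HC_one unfolding e by simp
qed

lemma r2_eq: "1 + qreal 2 * v3 = HC (1,0,2,0)"
  by (auto intro!: quat_eqI simp: Hcomb_eq qreal_def v3_def qI_def qJ_def qdefs)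

lemma primary_HC: "primary (HC e) \<longleftrightarrow> Icond (subc e (1,0,0,0)) \<or> Icond (subc e (1,0,2,0))"
proof -
  obtain a b c d where e: "e = (a,b,c,d)" by (metis prod_cases4)
  have "HC e - (1 + qreal 2 * v3) = HC (subc e (1,0,2,0))" unfolding r2_eq
    using HC_diff[of a b c d 1 0 2 0] unfolding e by simp
  moreover have "HC e \<in> H122" unfolding H122_iff by blast
  ultimately show ?thesis unfolding primary_def HC_minus_one by (simp only: Iideal_iff simp_thms)
qed

lemma even_mod4: "even ((a::int) mod 4) \<longleftrightarrow> even a" by presburger

lemma fm_parity: "odd (fm (a,b,c,d)) \<longleftrightarrow> odd (fm (a mod 4, b mod 4, c mod 4, d mod 4))"
  by (simp add: even_mod4)

lemma primary_odd: "Icond (subc e (1,0,0,0)) \<or> Icond (subc e (1,0,2,0)) \<Longrightarrow> odd (fm e)"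
  by (cases e) auto

lemma HC_sub: "HC x - HC y = HC (subc x y)"
proof -
  obtain a b c d where x: "x = (a,b,c,d)" by (metis prod_cases4)
  obtain a' b' c' d' where y: "y = (a',b',c',d')" by (metis prod_cases4)
  show ?thesis using HC_diff[of a b c d a' b' c' d'] unfolding x y by simp
qed

lemma HC_in: "HC x \<in> H122" unfolding H122_iff by blast

lemma red_mod:
  assumes "Icond (subc (mulc (a mod 4, b mod 4, c mod 4, d mod 4) u) r)"
  shows "Icond (subc (mulc (a,b,c,d) u) r)"
proof -
  define m where "m = (a mod 4, b mod 4, c mod 4, d mod 4)"
  define q where "q = (a div 4, b div 4, c div 4, d div 4)"
  have "HC m + qreal 4 * HC q = HC (a,b,c,d)"
  proof -
    have "qreal 4 * HC q = HC (4 * (a div 4), 4 * (b div 4), 4 * (c div 4), 4 * (d div 4))"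
      unfolding q_def using qreal_int_mult[of 4 "a div 4" "b div 4" "c div 4" "d div 4"] by simp
    then show ?thesis unfolding m_def using HC_add[of "a mod 4" "b mod 4" "c mod 4" "d mod 4"]
      by (simp add: mod_mult_div_eq)
  qed
  then have E: "HC (a,b,c,d) = HC m + qreal 4 * HC q" by simp
  have "HC (a,b,c,d) * HC u - HC r = (HC m * HC u - HC r) + qreal 4 * (HC q * HC u)"
    unfolding E by (simp add: algebra_simps)
  moreover have "HC m * HC u - HC r \<in> Iideal" using assms unfolding m_def HC_mult HC_sub Iideal_iff .
  moreover have "qreal 4 * (HC q * HC u) \<in> Iideal" by (rule I_four) (simp add: HC_mult HC_in)
  ultimately have "HC (a,b,c,d) * HC u - HC r \<in> Iideal" by (metis I_add)
  then show ?thesis unfolding HC_mult HC_sub Iideal_iff .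
qed

lemma exist_unit: "odd (fm e) \<Longrightarrow> \<exists>u\<in>set U24. primary (HC e * HC u)"
proof -
  assume o: "odd (fm e)"
  obtain a b c d where e: "e = (a,b,c,d)" by (metis prod_cases4)
  have om: "odd (fm (a mod 4, b mod 4, c mod 4, d mod 4))" using o fm_parity unfolding e by blast
  have mb: "x mod 4 \<in> {0..3}" for x :: int by simp
  have "(a mod 4, b mod 4, c mod 4, d mod 4) \<in> set box4" unfolding box4_mem using mb by blast
  then obtain u where u: "u \<in> set U24"
    "Icond (subc (mulc (a mod 4, b mod 4, c mod 4, d mod 4) u) (1,0,0,0)) \<or>
     Icond (subc (mulc (a mod 4, b mod 4, c mod 4, d mod 4) u) (1,0,2,0))"
    using finite_exist om by blast
  then have "Icond (subc (mulc e u) (1,0,0,0)) \<or> Icond (subc (mulc e u) (1,0,2,0))"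
    unfolding e using red_mod by blast
  then have "primary (HC e * HC u)" unfolding HC_mult primary_HC .
  then show ?thesis using u(1) by blast
qed

lemma uniq_unit:
  assumes "primary (HC e)" "fm f = 1" "primary (HC e * HC f)"
  shows "f = (1,0,0,0)"
proof -
  obtain r1 where r1: "r1 \<in> {(1,0,0,0),(1,0,2,0)}" "Icond (subc e r1)" using assms(1) unfolding primary_HC by blast
  obtain r2 where r2: "r2 \<in> {(1,0,0,0),(1,0,2,0)}" "Icond (subc (mulc e f) r2)"
    using assms(3) unfolding HC_mult primary_HC by blast
  have "HC (subc (mulc r1 f) r2) = (HC e * HC f - HC r2) - (HC e - HC r1) * HC f"
    unfolding HC_sub[symmetric] HC_mult[symmetric] by (simp add: algebra_simps)
  moreover have "HC e * HC f - HC r2 \<in> Iideal" using r2(2) unfolding HC_mult HC_sub Iideal_iff .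
  moreover have "(HC e - HC r1) * HC f \<in> Iideal"
    using r1(2) unfolding HC_sub Iideal_iff[symmetric] by (rule I_right) (rule HC_in)
  ultimately have "Icond (subc (mulc r1 f) r2)" using I_diff Iideal_iff by metis
  then show ?thesis using U24_uniq[OF fm1_U24[OF assms(2)] r1(1) r2(1)] by blast
qed


theorem lemma51:
  fixes c :: quat and p :: int
  assumes "primitive c"
    and "prime p"
    and "\<exists>m::int. qN c = qreal (of_int (p * m))"
  shows "(\<forall>d. left_gcd c (qreal (of_int p)) d \<longrightarrow> Hprime d)
       \<and> (\<exists>!d. left_gcd c (qreal (of_int p)) d \<and> primary d)"
proof -
  obtain c1 c2 c3 c4 where cc: "c = Hcomb c1 c2 c3 c4" "gcd (gcd c1 c2) (gcd c3 c4) = 1"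
    using assms(1) unfolding primitive_def by auto
  have pc: "primary c" using assms(1) unfolding primitive_def by blast
  have cHC: "c = HC (c1,c2,c3,c4)" using cc by simp
  have cH: "c \<in> H122" using cHC HC_in by metis
  obtain m where m: "qN c = qreal (of_int (p*m))" using assms(3) by blast
  have nm: "nrm c = of_int (p*m)" using m qN_eq qreal_inj by metis
  have odd: "odd (fm (c1,c2,c3,c4))" using pc unfolding cHC primary_HC by (rule primary_odd)
  have fmc: "fm (c1,c2,c3,c4) = p*m" using nm nrm_HC cHC by (metis of_int_eq_iff)
  have "odd (p*m)" using odd unfolding fmc .
  then have podd: "odd p" by simp
  have p1: "p > 1" using assms(2) prime_gt_1_int by blast
  define P where "P = qreal (of_int p)"
  have PH: "P \<in> H122" unfolding P_def by (rule H_int)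
  have P0: "P \<noteq> 0" unfolding P_def using p1 qreal_inj qreal_0 by (metis of_int_0 of_int_eq_iff not_one_less_zero less_trans zero_less_one)
  have gn: "nrm d = real (nat p)" if "left_gcd c P d" for d
    using gcd_norm[OF cHC cc(2) assms(2) nm] that unfolding P_def by blast
  have pn: "prime (nat p)" using assms(2) prime_int_nat_transfer by blast
  have part1: "\<forall>d. left_gcd c P d \<longrightarrow> Hprime d"
  proof (intro allI impI)
    fix d assume g: "left_gcd c P d"
    then have "d \<in> H122" unfolding left_gcd_def by blast
    then show "Hprime d" using prime_norm_Hprime[OF _ gn[OF g] pn] by blast
  qed
  obtain d0 where g0: "left_gcd c P d0" using gcd_exists[OF cH PH P0] by blast
  obtain a' b' x y where g': "d0 \<in> H122" "a' \<in> H122" "c = d0 * a'" "b' \<in> H122" "P = d0 * b'"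
     "x \<in> H122" "y \<in> H122" "d0 = c * x + P * y"
    using g0 unfolding left_gcd_def by blast
  obtain e0 where e0: "d0 = HC e0" using g'(1) H122_iff by blast
  have "real_of_int (fm e0) = real (nat p)" using gn[OF g0] e0 nrm_HC by simp
  then have "fm e0 = p" using p1 by simp
  then obtain u where u: "u \<in> set U24" "primary (HC e0 * HC u)" using exist_unit podd by metis
  define d1 where "d1 = d0 * HC u"
  have uu: "HC u * qconj (HC u) = 1" using mult_qconj nrm_HC U24_fm[OF u(1)] qreal_1 by simp
  have uH: "HC u \<in> H122" "qconj (HC u) \<in> H122" using HC_in H_conj by auto
  have g1: "left_gcd c P d1"
    unfolding left_gcd_def
  proof (intro conjI)
    show "d1 \<in> H122" unfolding d1_def by (rule H_mult[OF g'(1) uH(1)])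
    have "c = d0 * (HC u * qconj (HC u)) * a'" using g'(3) uu by simp
    then have "c = d1 * (qconj (HC u) * a')" unfolding d1_def by (simp add: mult.assoc)
    then show "\<exists>a'\<in>H122. c = d1 * a'" using H_mult[OF uH(2) g'(2)] by blast
    have "P = d0 * (HC u * qconj (HC u)) * b'" using g'(5) uu by simp
    then have "P = d1 * (qconj (HC u) * b')" unfolding d1_def by (simp add: mult.assoc)
    then show "\<exists>b'\<in>H122. P = d1 * b'" using H_mult[OF uH(2) g'(4)] by blast
    have "d1 = c * (x * HC u) + P * (y * HC u)" unfolding d1_def g'(8) by (simp add: distrib_right mult.assoc)
    then show "\<exists>x\<in>H122. \<exists>y\<in>H122. d1 = c * x + P * y"
      using H_mult[OF g'(6) uH(1)] H_mult[OF g'(7) uH(1)] by blast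
  qed
  have pd1: "primary d1" unfolding d1_def e0 using u(2) .
  have uniq: "d2 = d1" if g2: "left_gcd c P d2" and pd2: "primary d2" for d2
  proof -
    obtain a1 b1 where a1: "a1 \<in> H122" "c = d1 * a1" "b1 \<in> H122" "P = d1 * b1" "d1 \<in> H122"
      using g1 unfolding left_gcd_def by blast
    obtain x2 y2 where xy2: "x2 \<in> H122" "y2 \<in> H122" "d2 = c * x2 + P * y2"
      using g2 unfolding left_gcd_def by blast
    define w where "w = a1 * x2 + b1 * y2"
    have wH: "w \<in> H122" unfolding w_def using a1 xy2 by (intro H_add H_mult) auto
    have dw: "d2 = d1 * w" unfolding w_def xy2(3) using a1 by (simp add: distrib_left mult.assoc)
    obtain f where f: "w = HC f" using wH H122_iff by blast
    obtain e1 where e1: "d1 = HC e1" using a1(5) H122_iff by blast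
    have "nrm d2 = nrm d1 * nrm w" using dw nrm_mult by simp
    then have "real (nat p) = real (nat p) * nrm w" using gn[OF g1] gn[OF g2] by simp
    then have "nrm w = 1" using p1 by simp
    then have "fm f = 1" using f nrm_HC by simp
    then have "f = (1,0,0,0)" using uniq_unit[of e1 f] pd1 pd2 e1 dw f by simp
    then have "w = 1" using f HC_one by simp
    then show ?thesis using dw by simp
  qed
  have part2: "\<exists>!d. left_gcd c P d \<and> primary d"
    using g1 pd1 uniq by blast
  show ?thesis using part1 part2 unfolding P_def by blast
qed

end
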